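(* Let $R$ be an idempotent semiring and let $A,B$ be irreducible $R$-algebras such that the structure maps $R\to A$ and $R\to B$ have trivial kernel (the preimage of $0$ is $\{0\}$; this is automatic if $R$ is a semifield). Then $A\otimes_RB$ is irreducible.
   Context: Semirings are commutative with $1\neq0$; idempotent means $a+a=a$ for all $a$. A semiring is irreducible if whenever $xy$ is nilpotent, $x$ or $y$ is nilpotent. $A\otimes_RB$ is the tensor product of $R$-algebras (the coproduct in the category of $R$-algebras). *)

theory Defs
  imports Main "HOL-Library.Multiset"
begin

definition idempotent_semiring :: "'a::comm_semiring_1 itself \<Rightarrow> bool" where
  "idempotent_semiring _ \<longleftrightarrow> (\<forall>a::'a. a + a = a)"

definition nilpotent :: "'a::comm_semiring_1 \<Rightarrow> bool" where
  "nilpotent x \<longleftrightarrow> (\<exists>n. x ^ n = 0)"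

definition irreducible_semiring :: "'a::comm_semiring_1 itself \<Rightarrow> bool" where
  "irreducible_semiring _ \<longleftrightarrow>
     (\<forall>x y::'a. nilpotent (x * y) \<longrightarrow> nilpotent x \<or> nilpotent y)"

(* An R-algebra is a commutative semiring A with a semiring homomorphism R \<rightarrow> A *)
definition semiring_hom :: "('r::comm_semiring_1 \<Rightarrow> 'a::comm_semiring_1) \<Rightarrow> bool" where
  "semiring_hom f \<longleftrightarrow> f 0 = 0 \<and> f 1 = 1 \<and>
     (\<forall>x y. f (x + y) = f x + f y) \<and> (\<forall>x y. f (x * y) = f x * f y)"

(* Tensor product A \<otimes>_R B: finite formal sums (multisets) of pure tensors (a,b),
   modulo the smallest congruence identifying the tensor relations. *)

definition tmult :: "('a::comm_semiring_1 \<times> 'b::comm_semiring_1) multiset \<Rightarrow> ('a \<times> 'b) multiset \<Rightarrow> ('a \<times> 'b) multiset" where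
  "tmult x y = (\<Sum>p\<in>#x. image_mset (\<lambda>q. (fst p * fst q, snd p * snd q)) y)"

primrec tpow :: "('a::comm_semiring_1 \<times> 'b::comm_semiring_1) multiset \<Rightarrow> nat \<Rightarrow> ('a \<times> 'b) multiset" where
  "tpow x 0 = {#(1, 1)#}"
| "tpow x (Suc n) = tmult x (tpow x n)"

inductive tensor_eq :: "('r::comm_semiring_1 \<Rightarrow> 'a::comm_semiring_1) \<Rightarrow> ('r \<Rightarrow> 'b::comm_semiring_1)
    \<Rightarrow> ('a \<times> 'b) multiset \<Rightarrow> ('a \<times> 'b) multiset \<Rightarrow> bool"
  for \<phi> \<psi> where
  addL: "tensor_eq \<phi> \<psi> {#(a + a', b)#} {#(a, b), (a', b)#}"
| addR: "tensor_eq \<phi> \<psi> {#(a, b + b')#} {#(a, b), (a, b')#}"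
| scal: "tensor_eq \<phi> \<psi> {#(\<phi> r * a, b)#} {#(a, \<psi> r * b)#}"
| zeroL: "tensor_eq \<phi> \<psi> {#(0, b)#} {#}"
| zeroR: "tensor_eq \<phi> \<psi> {#(a, 0)#} {#}"
| refl: "tensor_eq \<phi> \<psi> x x"
| sym: "tensor_eq \<phi> \<psi> x y \<Longrightarrow> tensor_eq \<phi> \<psi> y x"
| trans: "tensor_eq \<phi> \<psi> x y \<Longrightarrow> tensor_eq \<phi> \<psi> y z \<Longrightarrow> tensor_eq \<phi> \<psi> x z"
| add: "tensor_eq \<phi> \<psi> x y \<Longrightarrow> tensor_eq \<phi> \<psi> (x + z) (y + z)"
| mult: "tensor_eq \<phi> \<psi> x y \<Longrightarrow> tensor_eq \<phi> \<psi> (tmult x z) (tmult y z)"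

definition tensor_nilpotent :: "('r::comm_semiring_1 \<Rightarrow> 'a::comm_semiring_1) \<Rightarrow> ('r \<Rightarrow> 'b::comm_semiring_1)
    \<Rightarrow> ('a \<times> 'b) multiset \<Rightarrow> bool" where
  "tensor_nilpotent \<phi> \<psi> x \<longleftrightarrow> (\<exists>n. tensor_eq \<phi> \<psi> (tpow x n) {#})"

definition tensor_irreducible :: "('r::comm_semiring_1 \<Rightarrow> 'a::comm_semiring_1) \<Rightarrow> ('r \<Rightarrow> 'b::comm_semiring_1) \<Rightarrow> bool" where
  "tensor_irreducible \<phi> \<psi> \<longleftrightarrow>
     (\<forall>x y. tensor_nilpotent \<phi> \<psi> (tmult x y) \<longrightarrow> tensor_nilpotent \<phi> \<psi> x \<or> tensor_nilpotent \<phi> \<psi> y)"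

end

theory Submission
  imports Defs
begin

lemma nil_mult:
  assumes "irreducible_semiring TYPE('a::comm_semiring_1)"
  shows "nilpotent ((a::'a) * b) \<longleftrightarrow> nilpotent a \<or> nilpotent b"
proof
  assume "nilpotent (a * b)" thus "nilpotent a \<or> nilpotent b"
    using assms unfolding irreducible_semiring_def by blast
next
  assume "nilpotent a \<or> nilpotent b"
  thus "nilpotent (a * b)"
    unfolding nilpotent_def by (metis mult_zero_left mult_zero_right power_mult_distrib)
qed

lemma pow_add_split: "\<exists>c. ((a::'a::comm_semiring_1) + b) ^ n = a ^ n + c"
proof (induction n)
  case 0 show ?case by (rule exI[of _ 0]) simp
next
  case (Suc n)
  then obtain c where c: "(a + b) ^ n = a ^ n + c" by blast
  show ?case
    by (rule exI[of _ "a * c + b * a ^ n + b * c"]) (simp add: c algebra_simps)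
qed

lemma nil_add_sum:
  assumes "(a::'a::comm_semiring_1) ^ i = 0" "b ^ j = 0"
  shows "(a + b) ^ (i + j) = 0"
proof -
  have "(a + b) ^ (i + j) = (\<Sum>k\<le>i+j. of_nat ((i+j) choose k) * a ^ k * b ^ (i + j - k))"
    by (rule binomial_ring)
  also have "\<dots> = 0"
  proof (rule sum.neutral, rule ballI)
    fix k assume "k \<in> {..i+j}"
    show "of_nat ((i+j) choose k) * a ^ k * b ^ (i + j - k) = 0"
    proof (cases "i \<le> k")
      case True
      then have "a ^ k = a ^ i * a ^ (k - i)" by (simp add: power_add[symmetric])
      then show ?thesis using assms by simp
    next
      case False
      then have "i + j - k = j + (i + j - k - j)" by simp
      then have "b ^ (i + j - k) = b ^ j * b ^ (i + j - k - j)" by (metis power_add)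
      then show ?thesis using assms by simp
    qed
  qed
  finally show ?thesis .
qed

lemma nil_add:
  assumes idem: "(1::'a::comm_semiring_1) + 1 = 1"
  shows "nilpotent ((a::'a) + b) \<longleftrightarrow> nilpotent a \<and> nilpotent b"
proof -
  have ss: "s + s = s" for s :: 'a
    by (metis distrib_left mult.right_neutral idem)
  have zsf: "s = 0" if "s + t = 0" for s t :: 'a
  proof -
    have "s = s + (s + t)" using that by simp
    also have "\<dots> = (s + s) + t" by (simp add: add.assoc)
    also have "\<dots> = 0" using ss that by simp
    finally show ?thesis .
  qed
  show ?thesis
  proof
    assume "nilpotent (a + b)"
    then obtain n where n: "(a + b) ^ n = 0" unfolding nilpotent_def by blast
    obtain c where c: "(a + b) ^ n = a ^ n + c" using pow_add_split by blast
    obtain d where d: "(b + a) ^ n = b ^ n + d" using pow_add_split by blast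
    have "a ^ n = 0" using zsf[of "a ^ n" c] n c by simp
    moreover have "b ^ n = 0" using zsf[of "b ^ n" d] n d by (simp add: add.commute)
    ultimately show "nilpotent a \<and> nilpotent b" unfolding nilpotent_def by blast
  next
    assume "nilpotent a \<and> nilpotent b"
    then show "nilpotent (a + b)" unfolding nilpotent_def using nil_add_sum by blast
  qed
qed

lemma hom_pow: "semiring_hom f \<Longrightarrow> f (r ^ n) = f r ^ n"
  by (induction n) (auto simp: semiring_hom_def)

lemma nil_hom:
  assumes "semiring_hom f" "\<forall>r. f r = 0 \<longrightarrow> r = 0"
  shows "nilpotent (f r) \<longleftrightarrow> (\<exists>n. r ^ n = 0)"
  using assms hom_pow[OF assms(1)] unfolding nilpotent_def semiring_hom_def by metis

lemma idem_hom:
  assumes "idempotent_semiring TYPE('r::comm_semiring_1)" "semiring_hom (f :: 'r \<Rightarrow> 'a::comm_semiring_1)"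
  shows "(1::'a) + 1 = 1"
proof -
  have "(1::'r) + 1 = 1" using assms(1) unfolding idempotent_semiring_def by blast
  then have "f (1 + 1) = f 1" by simp
  moreover have "f (1 + 1) = f 1 + f 1" "f 1 = 1" using assms(2) unfolding semiring_hom_def by blast+
  ultimately show ?thesis by simp
qed

lemma nil_one: "\<not> nilpotent (1::'a::comm_semiring_1)"
  unfolding nilpotent_def by simp

lemma nil_zero: "nilpotent (0::'a::comm_semiring_1)"
  unfolding nilpotent_def by (rule exI[of _ 1]) simp

definition pm :: "'a::comm_semiring_1 \<times> 'b::comm_semiring_1 \<Rightarrow> 'a \<times> 'b \<Rightarrow> 'a \<times> 'b" where
  "pm p q = (fst p * fst q, snd p * snd q)"

lemma tmult_empty_left[simp]: "tmult {#} y = {#}"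
  by (simp add: tmult_def)

lemma tmult_add_mset_left[simp]: "tmult (add_mset p x) y = image_mset (pm p) y + tmult x y"
  unfolding tmult_def pm_def[abs_def] by simp

lemma tmult_plus_left: "tmult (x + x') y = tmult x y + tmult x' y"
  by (simp add: tmult_def)

lemma tmult_empty_right[simp]: "tmult x {#} = {#}"
  by (induction x) auto

lemma tmult_add_mset_right[simp]: "tmult x (add_mset q y) = image_mset (\<lambda>p. pm p q) x + tmult x y"
  by (induction x) auto

lemma pm_comm: "pm p q = pm q p"
  by (simp add: pm_def mult.commute)

lemma pm_assoc: "pm (pm p q) r = pm p (pm q r)"
  by (simp add: pm_def mult.assoc)

lemma tmult_comm: "tmult x y = tmult y x"
proof (induction x)
  case empty then show ?case by simp
next
  case (add p x)
  have "image_mset (pm p) y = image_mset (\<lambda>q. pm q p) y"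
    by (rule image_mset_cong) (simp add: pm_comm)
  then show ?case using add by simp
qed

lemma tmult_plus_right: "tmult x (y + y') = tmult x y + tmult x y'"
  using tmult_plus_left[of y y' x] tmult_comm by metis

lemma tmult_image: "tmult (image_mset (pm p) y) z = image_mset (pm p) (tmult y z)"
proof (induction y)
  case empty then show ?case by simp
next
  case (add q y)
  have "image_mset (pm (pm p q)) z = image_mset (pm p) (image_mset (pm q) z)"
    by (simp add: image_mset.compositionality o_def) (rule image_mset_cong, simp add: pm_assoc)
  then show ?case using add by simp
qed

lemma tmult_assoc: "tmult (tmult x y) z = tmult x (tmult y z)"
  by (induction x) (simp_all add: tmult_plus_left tmult_image)

lemma pm_one: "pm (1, 1) = (\<lambda>q. q)"
  by (rule ext) (simp add: pm_def)

lemma tmult_one[simp]: "tmult {#(1,1)#} u = u"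
  by (simp add: pm_one)

lemma set_tmult: "set_mset (tmult x y) = {pm p q | p q. p \<in># x \<and> q \<in># y}"
  by (induction x) auto

lemma tmult_single: "tmult {#p#} {#q#} = {#pm p q#}"
  by simp

lemma tpow_single: "tpow {#(a, b)#} n = {#(a ^ n, b ^ n)#}"
  by (induction n) (simp_all add: pm_def)

lemma tpow_split: "\<exists>u v. tpow (x + y) (i + j) = tmult (tpow x i) u + tmult (tpow y j) v"
proof (induction i arbitrary: j)
  case 0
  show ?case by (rule exI[of _ "tpow (x + y) j"], rule exI[of _ "{#}"]) (simp add: pm_one)
next
  case (Suc i)
  note outer = Suc.IH
  show ?case
  proof (induction j)
    case 0
    show ?case by (rule exI[of _ "{#}"], rule exI[of _ "tpow (x + y) (Suc i)"]) (simp add: pm_one)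
  next
    case (Suc j)
    obtain u v where uv: "tpow (x + y) (i + Suc j) = tmult (tpow x i) u + tmult (tpow y (Suc j)) v"
      using outer by blast
    obtain u' v' where uv': "tpow (x + y) (Suc i + j) = tmult (tpow x (Suc i)) u' + tmult (tpow y j) v'"
      using Suc.IH by blast
    have T: "tpow (x + y) (Suc i + Suc j) = tmult x (tpow (x + y) (i + Suc j)) + tmult y (tpow (x + y) (Suc i + j))"
      by (simp add: tmult_plus_left)
    have A: "tmult x (tpow (x + y) (i + Suc j)) = tmult (tpow x (Suc i)) u + tmult (tpow y (Suc j)) (tmult x v)"
      unfolding uv tmult_plus_right
      by (simp add: tmult_assoc[symmetric], metis tmult_assoc tmult_comm)
    have B: "tmult y (tpow (x + y) (Suc i + j)) = tmult (tpow x (Suc i)) (tmult y u') + tmult (tpow y (Suc j)) v'"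
      unfolding uv' tmult_plus_right
      by (simp add: tmult_assoc[symmetric], metis tmult_assoc tmult_comm)
    show ?case
      by (rule exI[of _ "u + tmult y u'"], rule exI[of _ "tmult x v + v'"])
         (unfold T A B tmult_plus_right, simp only: add_ac)
  qed
qed

definition good :: "('a::comm_semiring_1 \<times> 'b::comm_semiring_1) multiset \<Rightarrow> bool" where
  "good x \<longleftrightarrow> (\<exists>p\<in>#x. \<not> nilpotent (fst p) \<and> \<not> nilpotent (snd p))"

lemma good_tmult:
  assumes "irreducible_semiring TYPE('a::comm_semiring_1)" "irreducible_semiring TYPE('b::comm_semiring_1)"
  shows "good (tmult (x :: ('a \<times> 'b) multiset) y) \<longleftrightarrow> good x \<and> good y"
  unfolding good_def set_tmult using nil_mult[OF assms(1)] nil_mult[OF assms(2)]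
  by (auto simp: pm_def) force+

lemma good_tpow:
  assumes "irreducible_semiring TYPE('a::comm_semiring_1)" "irreducible_semiring TYPE('b::comm_semiring_1)"
    and "good (x :: ('a \<times> 'b) multiset)"
  shows "good (tpow x n)"
  using assms(3) by (induction n) (simp add: good_def nil_one, simp add: good_tmult[OF assms(1,2)])

lemma good_invariant:
  fixes \<phi> :: "'r::comm_semiring_1 \<Rightarrow> 'a::comm_semiring_1"
    and \<psi> :: "'r \<Rightarrow> 'b::comm_semiring_1"
  assumes "idempotent_semiring TYPE('r)"
    and ia: "irreducible_semiring TYPE('a)" and ib: "irreducible_semiring TYPE('b)"
    and hp: "semiring_hom \<phi>" and hq: "semiring_hom \<psi>"
    and kp: "\<forall>r. \<phi> r = 0 \<longrightarrow> r = 0" and kq: "\<forall>r. \<psi> r = 0 \<longrightarrow> r = 0"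
    and "tensor_eq \<phi> \<psi> x y"
  shows "good x = good y"
  using assms(8)
proof (induction rule: tensor_eq.induct)
  case (addL a a' b)
  have "(1::'a) + 1 = 1" by (rule idem_hom[OF assms(1) hp])
  then show ?case by (auto simp: good_def nil_add)
next
  case (addR a b b')
  have "(1::'b) + 1 = 1" by (rule idem_hom[OF assms(1) hq])
  then show ?case by (auto simp: good_def nil_add)
next
  case (scal r a b)
  have "nilpotent (\<phi> r) \<longleftrightarrow> nilpotent (\<psi> r)"
    using nil_hom[OF hp kp] nil_hom[OF hq kq] by blast
  then show ?case by (auto simp: good_def nil_mult[OF ia] nil_mult[OF ib])
next
  case (zeroL b) then show ?case by (simp add: good_def nil_zero)
next
  case (zeroR a) then show ?case by (simp add: good_def nil_zero)
next
  case (add x y z) then show ?case by (auto simp: good_def)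
next
  case (mult x y z) then show ?case by (simp add: good_tmult[OF ia ib])
qed auto

lemma E_mult_zero: "tensor_eq \<phi> \<psi> x {#} \<Longrightarrow> tensor_eq \<phi> \<psi> (tmult x z) {#}"
  using tensor_eq.mult[of \<phi> \<psi> x "{#}" z] by simp

lemma E_mult_zero_r: "tensor_eq \<phi> \<psi> x {#} \<Longrightarrow> tensor_eq \<phi> \<psi> (tmult z x) {#}"
  using E_mult_zero tmult_comm by metis

lemma E_add_zero: "tensor_eq \<phi> \<psi> x {#} \<Longrightarrow> tensor_eq \<phi> \<psi> y {#} \<Longrightarrow> tensor_eq \<phi> \<psi> (x + y) {#}"
  using tensor_eq.add[of \<phi> \<psi> x "{#}" y] tensor_eq.trans by fastforce

lemma tnil_add:
  assumes "tensor_nilpotent \<phi> \<psi> x" "tensor_nilpotent \<phi> \<psi> y"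
  shows "tensor_nilpotent \<phi> \<psi> (x + y)"
proof -
  obtain n m where n: "tensor_eq \<phi> \<psi> (tpow x n) {#}" and m: "tensor_eq \<phi> \<psi> (tpow y m) {#}"
    using assms unfolding tensor_nilpotent_def by blast
  obtain u v where uv: "tpow (x + y) (n + m) = tmult (tpow x n) u + tmult (tpow y m) v"
    using tpow_split by blast
  have "tensor_eq \<phi> \<psi> (tpow (x + y) (n + m)) {#}"
    unfolding uv by (intro E_add_zero E_mult_zero n m)
  then show ?thesis unfolding tensor_nilpotent_def by blast
qed

lemma tnil_single:
  assumes "nilpotent a \<or> nilpotent b"
  shows "tensor_nilpotent \<phi> \<psi> {#(a, b)#}"
proof -
  obtain n where "a ^ n = 0 \<or> b ^ n = 0" using assms unfolding nilpotent_def by blast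
  then have "tensor_eq \<phi> \<psi> (tpow {#(a, b)#} n) {#}"
    unfolding tpow_single using tensor_eq.zeroL tensor_eq.zeroR by fastforce
  then show ?thesis unfolding tensor_nilpotent_def by blast
qed

lemma bad_nil: "\<not> good x \<Longrightarrow> tensor_nilpotent \<phi> \<psi> x"
proof (induction x)
  case empty
  have "tpow ({#} :: ('a \<times> 'b) multiset) 1 = {#}" by simp
  then show ?case unfolding tensor_nilpotent_def using tensor_eq.refl by metis
next
  case (add p x)
  obtain a b where p: "p = (a, b)" by fastforce
  have "nilpotent a \<or> nilpotent b" "\<not> good x" using add.prems p by (auto simp: good_def)
  then have "tensor_nilpotent \<phi> \<psi> ({#(a, b)#} + x)"
    using tnil_add tnil_single add.IH by blast
  then show ?case using p by simp
qed

theorem proposition5p10: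
  fixes \<phi> :: "'r::comm_semiring_1 \<Rightarrow> 'a::comm_semiring_1"
    and \<psi> :: "'r \<Rightarrow> 'b::comm_semiring_1"
  assumes "idempotent_semiring TYPE('r)"
    and "irreducible_semiring TYPE('a)" and "irreducible_semiring TYPE('b)"
    and "semiring_hom \<phi>" and "semiring_hom \<psi>"
    and "\<forall>r. \<phi> r = 0 \<longrightarrow> r = 0" and "\<forall>r. \<psi> r = 0 \<longrightarrow> r = 0"
  shows "tensor_irreducible \<phi> \<psi>"
  unfolding tensor_irreducible_def
proof (intro allI impI)
  fix x y :: "('a \<times> 'b) multiset"
  assume "tensor_nilpotent \<phi> \<psi> (tmult x y)"
  then obtain n where n: "tensor_eq \<phi> \<psi> (tpow (tmult x y) n) {#}"
    unfolding tensor_nilpotent_def by blast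
  have "\<not> good (tmult x y)"
  proof
    assume "good (tmult x y)"
    then have "good (tpow (tmult x y) n)" using good_tpow assms(2,3) by blast
    then have "good ({#} :: ('a \<times> 'b) multiset)" using good_invariant[OF assms n] by simp
    then show False by (simp add: good_def)
  qed
  then have "\<not> good x \<or> \<not> good y" using good_tmult[OF assms(2,3)] by blast
  then show "tensor_nilpotent \<phi> \<psi> x \<or> tensor_nilpotent \<phi> \<psi> y" using bad_nil by blast
qed

end
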